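(* Let $p\leq q$ be positive integers, $n=p+q$, and let $M$ be an $n\times n$ complex matrix. Then $M$ satisfies $M=M^*$ and $M^*I_{p,q}M=I_{p,q}$ if and only if there exist an integer $k$ with $0\leq k\leq q$, vectors $z_1^+,\dots,z_k^+\in\mathbb{C}^p$ that are pairwise orthogonal (some of them possibly zero), and vectors $z_1^-,\dots,z_k^-\in\mathbb{C}^q$ that are pairwise orthogonal (some of them possibly zero), such that for every $j$ \[ \|z_j^+\|^2+\|z_j^-\|^2=1,\qquad \|z_j^+\|^2\neq\|z_j^-\|^2, \] and such that either $M$ or $-M$ equals \[ \sum_{j=1}^k\lambda_j z_jz_j^*-I_{p,q},\qquad\text{where } z_j=\begin{pmatrix}z_j^+\\ z_j^-\end{pmatrix}\in\mathbb{C}^n,\quad \lambda_j=\frac{2}{\|z_j^+\|^2-\|z_j^-\|^2}. \]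
   Context: $I_{p,q}=\mathrm{diag}\{I_p,-I_q\}$, where $I_p$ is the $p\times p$ identity matrix; $M^*$ and $z^*$ denote conjugate transposes; $\|\cdot\|$ and orthogonality refer to the standard Euclidean (Hermitian) inner product $\langle u,v\rangle=u^*v$. Throughout the paper it is assumed that $p\leq q$. *)

theory Defs
  imports "Jordan_Normal_Form.Matrix"
begin

definition adj :: "complex mat \<Rightarrow> complex mat" where
  "adj M = mat (dim_col M) (dim_row M) (\<lambda>(i,j). cnj (M $$ (j,i)))"

definition Ipq :: "nat \<Rightarrow> nat \<Rightarrow> complex mat" where
  "Ipq p q = mat (p+q) (p+q) (\<lambda>(i,j). if i = j then (if i < p then 1 else -1) else 0)"

definition vnorm2 :: "complex vec \<Rightarrow> real" where
  "vnorm2 v = (\<Sum>i<dim_vec v. (cmod (v $ i))\<^sup>2)"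

definition pq_matrix :: "nat \<Rightarrow> nat \<Rightarrow> nat \<Rightarrow> (nat \<Rightarrow> complex vec) \<Rightarrow> (nat \<Rightarrow> complex vec) \<Rightarrow> complex mat" where
  "pq_matrix p q k zp zm =
     mat (p+q) (p+q) (\<lambda>(a,b). \<Sum>j<k.
        complex_of_real (2 / (vnorm2 (zp j) - vnorm2 (zm j)))
          * (zp j @\<^sub>v zm j) $ a * cnj ((zp j @\<^sub>v zm j) $ b)) - Ipq p q"

end

theory Submission
  imports Defs "Jordan_Normal_Form.Schur_Decomposition"
begin
definition ip :: "complex vec \<Rightarrow> complex vec \<Rightarrow> complex" where
  "ip x y = (\<Sum>a<dim_vec x. cnj (x $ a) * y $ a)"

lemma cip_ip: "u \<in> carrier_vec n \<Longrightarrow> w \<in> carrier_vec n \<Longrightarrow> u \<bullet>c w = ip w u"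
  by (auto simp: scalar_prod_def ip_def atLeast0LessThan mult.commute intro!: sum.cong)

lemma ip_cnj: "x \<in> carrier_vec n \<Longrightarrow> y \<in> carrier_vec n \<Longrightarrow> ip y x = cnj (ip x y)"
  by (auto simp: ip_def mult.commute)

lemma ip_self: "ip x x = complex_of_real (vnorm2 x)"
  unfolding ip_def vnorm2_def of_real_sum by (rule sum.cong, auto simp: mult.commute, metis complex_norm_square of_real_power)

lemma vnorm2_ge0: "vnorm2 x \<ge> 0"
  by (simp add: vnorm2_def sum_nonneg)

lemma vnorm2_pos: assumes "x \<in> carrier_vec n" "x \<noteq> 0\<^sub>v n" shows "vnorm2 x > 0"
proof -
  obtain i where i: "i < n" "x $ i \<noteq> 0" using assms by (metis eq_vecI carrier_vecD index_zero_vec(1) index_zero_vec(2))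
  have "(cmod (x $ i))\<^sup>2 \<le> vnorm2 x" unfolding vnorm2_def
    by (rule member_le_sum[of i "{..<dim_vec x}" "\<lambda>i. (cmod (x $ i))\<^sup>2", simplified]) (use i assms in auto)
  moreover have "(cmod (x $ i))\<^sup>2 > 0" using i by simp
  ultimately show ?thesis by linarith
qed

lemma ip_smult_left: "ip (c \<cdot>\<^sub>v x) y = cnj c * ip x y"
  by (simp add: ip_def sum_distrib_left mult.assoc)

lemma ip_smult_right: "dim_vec y = dim_vec x \<Longrightarrow> ip x (c \<cdot>\<^sub>v y) = c * ip x y"
  by (simp add: ip_def sum_distrib_left mult_ac)

lemma eigen_exists:
  fixes A :: "complex mat"
  assumes A: "A \<in> carrier_mat n n" and n: "0 < n"
  shows "\<exists>e v. v \<in> carrier_vec n \<and> ip v v = 1 \<and> A *\<^sub>v v = e \<cdot>\<^sub>v v"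
proof -
  obtain as where cp: "char_poly A = (\<Prod>a\<leftarrow>as. [:- a, 1:])" and len: "length as = n"
    using char_poly_factorized[OF A] by blast
  then obtain e es where as: "as = e # es" using n by (cases as) auto
  have "poly (char_poly A) e = 0" unfolding cp as by (simp add: poly_prod_list)
  hence "eigenvalue A e" using eigenvalue_root_char_poly[OF A] by simp
  then obtain v where "eigenvector A v e" unfolding eigenvalue_def by blast
  hence v: "v \<in> carrier_vec n" "v \<noteq> 0\<^sub>v n" "A *\<^sub>v v = e \<cdot>\<^sub>v v" unfolding eigenvector_def using A by auto
  define c where "c = complex_of_real (1 / sqrt (vnorm2 v))"
  have pos: "vnorm2 v > 0" using vnorm2_pos[OF v(1,2)] .
  have "ip (c \<cdot>\<^sub>v v) (c \<cdot>\<^sub>v v) = cnj c * c * complex_of_real (vnorm2 v)"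
    by (simp add: ip_smult_left ip_smult_right) (simp add: ip_self)
  also have "\<dots> = 1" unfolding c_def using pos
    by (simp flip: of_real_mult add: field_simps)
  finally have "ip (c \<cdot>\<^sub>v v) (c \<cdot>\<^sub>v v) = 1" .
  moreover have "A *\<^sub>v (c \<cdot>\<^sub>v v) = e \<cdot>\<^sub>v (c \<cdot>\<^sub>v v)"
    using mult_mat_vec[OF A v(1)] v(3) by (auto simp: smult_smult_assoc mult.commute)
  ultimately show ?thesis using v(1) by (intro exI[of _ e] exI[of _ "c \<cdot>\<^sub>v v"]) auto
qed

lemma ip_zero_left: "ip (0\<^sub>v n) y = 0" by (simp add: ip_def)

lemma onb_extend:
  fixes v :: "complex vec"
  assumes v: "v \<in> carrier_vec n" and v1: "ip v v = 1"
  shows "\<exists>w. (\<forall>i<n. w i \<in> carrier_vec n) \<and> w 0 = v \<and> (\<forall>i<n. \<forall>j<n. ip (w i) (w j) = (if i = j then 1 else 0))"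
proof -
  have v0: "v \<noteq> 0\<^sub>v n" using v1 ip_zero_left by force
  have n: "n > 0" using v v0 by (cases n) (auto intro!: eq_vecI)
  interpret cof_vec_space n "TYPE(complex)" .
  define b where "b = basis_completion v"
  from basis_completion[OF v v0, folded b_def]
  have dist_b: "distinct b" 
    and indep: "\<not> lin_dep (set b)" and b: "set b \<subseteq> carrier_vec n" and hdb: "hd b = v" 
    and len_b: "length b = n" by auto
  from hdb len_b n obtain vs where bv: "b = v # vs" by (cases b, auto)
  define ws where "ws = gram_schmidt n b"
  from gram_schmidt_result[OF b dist_b indep refl, folded ws_def]
  have ws: "set ws \<subseteq> carrier_vec n" "corthogonal ws" "length ws = n" 
    by (auto simp: len_b)
  from gram_schmidt_hd[OF v, of vs, folded bv] have hdws: "hd ws = v" unfolding ws_def .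
  have ws0: "ws ! 0 = v" using hdws ws(3) n by (cases ws) auto
  have wsc: "ws ! i \<in> carrier_vec n" if "i < n" for i using ws that by auto
  have wsip: "ip (ws ! i) (ws ! j) = 0 \<longleftrightarrow> i \<noteq> j" if "i < n" "j < n" for i j
    using corthogonalD[OF ws(2), of j i] that ws(3) cip_ip[OF wsc[of j] wsc[of i]] by auto
  define w where "w i = complex_of_real (1 / sqrt (vnorm2 (ws ! i))) \<cdot>\<^sub>v (ws ! i)" for i
  have pos: "vnorm2 (ws ! i) > 0" if "i < n" for i
    using wsip[OF that that] vnorm2_ge0[of "ws ! i"] by (auto simp: ip_self)
  have "ip (w i) (w j) = (if i = j then 1 else 0)" if "i < n" "j < n" for i j
  proof -
    have "ip (w i) (w j) = complex_of_real (1 / sqrt (vnorm2 (ws ! i))) * complex_of_real (1 / sqrt (vnorm2 (ws ! j))) * ip (ws ! i) (ws ! j)"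
      unfolding w_def using wsc[OF that(1)] wsc[OF that(2)] by (simp add: ip_smult_left ip_smult_right)
    also have "\<dots> = (if i = j then 1 else 0)"
    proof (cases "i = j")
      case True
      then show ?thesis using pos[OF that(1)] by (simp add: ip_self flip: of_real_mult)
    next
      case False
      then show ?thesis using wsip[OF that] by simp
    qed
    finally show ?thesis .
  qed
  moreover have "w 0 = v" unfolding w_def ws0 using v1 by (simp add: ip_self)
  moreover have "w i \<in> carrier_vec n" if "i < n" for i unfolding w_def using wsc[OF that] by simp
  ultimately show ?thesis by blast
qed

lemma onb_complete:
  fixes w :: "nat \<Rightarrow> complex vec"
  assumes w: "\<forall>i<n. w i \<in> carrier_vec n" and on: "\<forall>i<n. \<forall>j<n. ip (w i) (w j) = (if i = j then 1 else 0)"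
    and a: "a < n" and b: "b < n"
  shows "(\<Sum>i<n. w i $ a * cnj (w i $ b)) = (if a = b then 1 else 0)"
proof -
  define W where "W = mat n n (\<lambda>(a,i). w i $ a)"
  have W: "W \<in> carrier_mat n n" unfolding W_def by simp
  have aW: "adj W \<in> carrier_mat n n" unfolding adj_def W_def by simp
  have "adj W * W = 1\<^sub>m n"
  proof (rule eq_matI)
    fix i j assume "i < dim_row (1\<^sub>m n)" "j < dim_col (1\<^sub>m n)"
    hence ij: "i < n" "j < n" by auto
    have "(adj W * W) $$ (i, j) = (\<Sum>a<n. cnj (w i $ a) * w j $ a)"
      using ij W aW by (simp add: index_mult_mat adj_def W_def scalar_prod_def atLeast0LessThan)
    also have "\<dots> = ip (w i) (w j)" using w ij by (auto simp: ip_def)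
    finally show "(adj W * W) $$ (i, j) = 1\<^sub>m n $$ (i, j)" using on ij by simp
  qed (use W aW in auto)
  hence "W * adj W = 1\<^sub>m n" using mat_mult_left_right_inverse[OF aW W] by simp
  hence "(W * adj W) $$ (a, b) = (if a = b then 1 else 0)" using a b by simp
  moreover have "(W * adj W) $$ (a, b) = (\<Sum>i<n. w i $ a * cnj (w i $ b))"
    using a b W aW by (simp add: index_mult_mat adj_def W_def scalar_prod_def atLeast0LessThan)
  ultimately show ?thesis by simp
qed

lemma mv_index: "A \<in> carrier_mat n n \<Longrightarrow> x \<in> carrier_vec n \<Longrightarrow> c < n \<Longrightarrow>
  (A *\<^sub>v x) $ c = (\<Sum>d<n. A $$ (c,d) * x $ d)"
  by (simp add: index_mult_mat_vec scalar_prod_def atLeast0LessThan)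

lemma ip_sum: "x \<in> carrier_vec n \<Longrightarrow> ip x y = (\<Sum>a<n. cnj (x $ a) * y $ a)"
  by (simp add: ip_def)

lemma lincomb_ip:
  assumes W: "\<And>k. k \<in> K \<Longrightarrow> W k \<in> carrier_vec n" and K: "finite K"
  shows "ip (vec n (\<lambda>a. \<Sum>k\<in>K. \<alpha> k * W k $ a)) (vec n (\<lambda>a. \<Sum>k\<in>K. \<beta> k * W k $ a))
       = (\<Sum>k\<in>K. \<Sum>k'\<in>K. cnj (\<alpha> k) * \<beta> k' * ip (W k) (W k'))"
proof -
  have "ip (vec n (\<lambda>a. \<Sum>k\<in>K. \<alpha> k * W k $ a)) (vec n (\<lambda>a. \<Sum>k\<in>K. \<beta> k * W k $ a))
     = (\<Sum>a<n. \<Sum>k\<in>K. \<Sum>k'\<in>K. cnj (\<alpha> k) * \<beta> k' * (cnj (W k $ a) * W k' $ a))"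
    by (simp add: ip_def cnj_sum sum_distrib_left sum_distrib_right mult_ac)
  also have "\<dots> = (\<Sum>k\<in>K. \<Sum>k'\<in>K. \<Sum>a<n. cnj (\<alpha> k) * \<beta> k' * (cnj (W k $ a) * W k' $ a))"
    by (subst sum.swap, rule sum.cong, simp, rule sum.swap)
  also have "\<dots> = (\<Sum>k\<in>K. \<Sum>k'\<in>K. cnj (\<alpha> k) * \<beta> k' * ip (W k) (W k'))"
    by (rule sum.cong, simp, rule sum.cong, simp, simp add: ip_sum[OF W] sum_distrib_left)
  finally show ?thesis .
qed

lemma ip_lincomb:
  assumes W: "\<And>k. k \<in> K \<Longrightarrow> W k \<in> carrier_vec n" and x: "x \<in> carrier_vec n"
  shows "ip x (vec n (\<lambda>a. \<Sum>k\<in>K. \<beta> k * W k $ a)) = (\<Sum>k\<in>K. \<beta> k * ip x (W k))"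
proof -
  have "ip x (vec n (\<lambda>a. \<Sum>k\<in>K. \<beta> k * W k $ a)) = (\<Sum>a<n. \<Sum>k\<in>K. \<beta> k * (cnj (x $ a) * W k $ a))"
    using x by (simp add: ip_sum[OF x] sum_distrib_left mult_ac)
  also have "\<dots> = (\<Sum>k\<in>K. \<Sum>a<n. \<beta> k * (cnj (x $ a) * W k $ a))" by (rule sum.swap)
  also have "\<dots> = (\<Sum>k\<in>K. \<beta> k * ip x (W k))"
    by (rule sum.cong, simp, simp add: ip_sum[OF x] sum_distrib_left)
  finally show ?thesis .
qed

lemma triple_rearr:
  fixes X V c :: "_ \<Rightarrow> complex"
  shows "(\<Sum>i\<in>I. \<Sum>j\<in>J. X i * (\<Sum>l\<in>L. c l * Y l i * Z l j) * V j)
       = (\<Sum>l\<in>L. c l * (\<Sum>i\<in>I. Y l i * X i) * (\<Sum>j\<in>J. Z l j * V j))"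
proof -
  have "(\<Sum>i\<in>I. \<Sum>j\<in>J. X i * (\<Sum>l\<in>L. c l * Y l i * Z l j) * V j)
      = (\<Sum>i\<in>I. \<Sum>j\<in>J. \<Sum>l\<in>L. c l * (Y l i * X i) * (Z l j * V j))"
    by (simp add: sum_distrib_left sum_distrib_right mult_ac)
  also have "\<dots> = (\<Sum>i\<in>I. \<Sum>l\<in>L. \<Sum>j\<in>J. c l * (Y l i * X i) * (Z l j * V j))"
    by (rule sum.cong, simp, rule sum.swap)
  also have "\<dots> = (\<Sum>l\<in>L. \<Sum>i\<in>I. \<Sum>j\<in>J. c l * (Y l i * X i) * (Z l j * V j))"
    by (rule sum.swap)
  also have "\<dots> = (\<Sum>l\<in>L. c l * (\<Sum>i\<in>I. Y l i * X i) * (\<Sum>j\<in>J. Z l j * V j))"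
    by (simp add: sum_distrib_left sum_distrib_right mult_ac)
  finally show ?thesis .
qed

lemma sum_delta_mult: "finite K \<Longrightarrow> k \<in> K \<Longrightarrow> (\<Sum>k'\<in>K. f k' * (if k = k' then 1 else 0)) = (f k :: complex)"
  by (simp add: if_distrib cong: if_cong)

lemma sum_delta_mult1: "finite K \<Longrightarrow> k \<in> K \<Longrightarrow> (\<Sum>k'\<in>K. (if k = k' then 1 else 0) * f k') = (f k :: complex)"
proof -
  assume "finite K" "k \<in> K"
  have "(\<Sum>k'\<in>K. (if k = k' then 1 else 0) * f k') = (\<Sum>k'\<in>K. if k = k' then f k' else 0)"
    by (rule sum.cong) auto
  thus ?thesis using \<open>finite K\<close> \<open>k \<in> K\<close> by simp
qed

lemma sum_delta_mult2: "finite K \<Longrightarrow> k \<in> K \<Longrightarrow> (\<Sum>k'\<in>K. f k' * (if k' = k then 1 else 0)) = (f k :: complex)"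
proof -
  assume "finite K" "k \<in> K"
  have "(\<Sum>k'\<in>K. f k' * (if k' = k then 1 else 0)) = (\<Sum>k'\<in>K. if k = k' then f k' else 0)"
    by (rule sum.cong) auto
  thus ?thesis using \<open>finite K\<close> \<open>k \<in> K\<close> by simp
qed

lemma spectral:
  fixes A :: "complex mat"
  assumes "A \<in> carrier_mat n n" and "adj A = A"
  shows "\<exists>u d. (\<forall>i<n. u i \<in> carrier_vec n) \<and> (\<forall>i<n. \<forall>j<n. ip (u i) (u j) = (if i = j then 1 else 0))
     \<and> (\<forall>a<n. \<forall>b<n. A $$ (a,b) = (\<Sum>i<n. complex_of_real (d i) * u i $ a * cnj (u i $ b)))"
  using assms
proof (induction n arbitrary: A)
  case 0 then show ?case by auto
next
  case (Suc m)
  define n where "n = Suc m"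
  have A: "A \<in> carrier_mat n n" using Suc.prems by (auto simp: n_def)
  have n0: "0 < n" by (simp add: n_def)
  have herm: "cnj (A $$ (b,a)) = A $$ (a,b)" if "a < n" "b < n" for a b
  proof -
    have "adj A $$ (a,b) = cnj (A $$ (b,a))" using A that by (simp add: adj_def)
    thus ?thesis using Suc.prems(2) by simp
  qed
  obtain e v where v: "v \<in> carrier_vec n" "ip v v = 1" "A *\<^sub>v v = e \<cdot>\<^sub>v v"
    using eigen_exists[OF A n0] by auto
  obtain w where w: "\<forall>i<n. w i \<in> carrier_vec n" "w 0 = v"
      "\<forall>i<n. \<forall>j<n. ip (w i) (w j) = (if i = j then 1 else 0)"
    using onb_extend[OF v(1,2)] by blast
  have wc: "w i \<in> carrier_vec n" if "i < n" for i using w(1) that by auto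
  have comp: "(\<Sum>i<n. w i $ a * cnj (w i $ b)) = (if a = b then 1 else 0)" if "a < n" "b < n" for a b
    using onb_complete[OF w(1) w(3) that] .
  define Q where "Q i j = ip (w i) (A *\<^sub>v w j)" for i j
  have Aexp: "A $$ (a,b) = (\<Sum>i<n. \<Sum>j<n. w i $ a * Q i j * cnj (w j $ b))" if ab: "a < n" "b < n" for a b
  proof -
    have s1: "(\<Sum>d<n. A $$ (c,d) * (\<Sum>j<n. w j $ d * cnj (w j $ b))) = (\<Sum>j<n. (A *\<^sub>v w j) $ c * cnj (w j $ b))"
      if c: "c < n" for c
    proof -
      have "(\<Sum>d<n. A $$ (c,d) * (\<Sum>j<n. w j $ d * cnj (w j $ b))) = (\<Sum>d<n. \<Sum>j<n. A $$ (c,d) * w j $ d * cnj (w j $ b))"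
        by (simp only: sum_distrib_left mult.assoc)
      also have "\<dots> = (\<Sum>j<n. \<Sum>d<n. A $$ (c,d) * w j $ d * cnj (w j $ b))" by (rule sum.swap)
      also have "\<dots> = (\<Sum>j<n. (A *\<^sub>v w j) $ c * cnj (w j $ b))"
        by (rule sum.cong, simp, simp add: mv_index[OF A wc c] sum_distrib_right)
      finally show ?thesis .
    qed
    have "A $$ (a,b) = (\<Sum>c<n. (if a = c then 1 else 0) * (\<Sum>d<n. A $$ (c,d) * (if d = b then 1 else 0)))"
      using ab by (simp add: sum_delta_mult1 sum_delta_mult2)
    also have "\<dots> = (\<Sum>c<n. (\<Sum>i<n. w i $ a * cnj (w i $ c)) * (\<Sum>d<n. A $$ (c,d) * (\<Sum>j<n. w j $ d * cnj (w j $ b))))"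
      by (rule sum.cong, simp, subst comp, use ab in simp, simp, rule arg_cong2[where f = "(*)"], simp,
          rule sum.cong, simp, subst comp, use ab in auto)
    also have "\<dots> = (\<Sum>c<n. (\<Sum>i<n. w i $ a * cnj (w i $ c)) * (\<Sum>j<n. (A *\<^sub>v w j) $ c * cnj (w j $ b)))"
      by (rule sum.cong, simp, simp add: s1)
    also have "\<dots> = (\<Sum>c<n. \<Sum>i<n. \<Sum>j<n. w i $ a * (cnj (w i $ c) * (A *\<^sub>v w j) $ c) * cnj (w j $ b))"
      by (simp only: sum_product, simp add: mult_ac)
    also have "\<dots> = (\<Sum>i<n. \<Sum>c<n. \<Sum>j<n. w i $ a * (cnj (w i $ c) * (A *\<^sub>v w j) $ c) * cnj (w j $ b))"
      by (rule sum.swap)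
    also have "\<dots> = (\<Sum>i<n. \<Sum>j<n. \<Sum>c<n. w i $ a * (cnj (w i $ c) * (A *\<^sub>v w j) $ c) * cnj (w j $ b))"
      by (rule sum.cong, simp, rule sum.swap)
    also have "\<dots> = (\<Sum>i<n. \<Sum>j<n. w i $ a * Q i j * cnj (w j $ b))"
      unfolding Q_def
      by (rule sum.cong, simp, rule sum.cong, simp, simp add: ip_sum[OF wc] sum_distrib_left sum_distrib_right mult_ac)
    finally show ?thesis .
  qed
  have QQ: "Q i j = cnj (Q j i)" if ij: "i < n" "j < n" for i j
  proof -
    have "cnj (Q j i) = (\<Sum>c<n. \<Sum>d<n. w j $ c * A $$ (d,c) * cnj (w i $ d))"
      unfolding Q_def using ij
      by (simp add: ip_sum[OF wc] mv_index[OF A wc] cnj_sum sum_distrib_left herm mult_ac)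
    also have "\<dots> = (\<Sum>d<n. \<Sum>c<n. w j $ c * A $$ (d,c) * cnj (w i $ d))" by (rule sum.swap)
    also have "\<dots> = Q i j"
      unfolding Q_def using ij
      by (simp add: ip_sum[OF wc] mv_index[OF A wc] sum_distrib_left mult_ac)
    finally show ?thesis by simp
  qed
  have Q0: "Q i 0 = (if i = 0 then e else 0)" if i: "i < n" for i
  proof -
    have "Q i 0 = e * ip (w i) (w 0)" unfolding Q_def w(2) v(3)
      using v(1) wc[OF i] by (simp add: ip_smult_right)
    thus ?thesis using w(3) i by auto
  qed
  have er: "cnj e = e" using QQ[of 0 0] Q0[of 0] n0 by simp
  have Q0': "Q 0 j = (if j = 0 then e else 0)" if j: "j < n" for j
    using QQ[OF _ j, of 0] Q0[OF j] er n0 by auto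
  define B where "B = mat m m (\<lambda>(i,j). Q (Suc i) (Suc j))"
  have B: "B \<in> carrier_mat m m" unfolding B_def by simp
  have aB: "adj B = B"
  proof -
    have "cnj (Q (Suc j) (Suc i)) = Q (Suc i) (Suc j)" if "i < m" "j < m" for i j
      using QQ[of "Suc i" "Suc j"] that by (simp add: n_def)
    thus ?thesis by (intro eq_matI) (auto simp: B_def adj_def)
  qed
  obtain y dd where y: "\<forall>i<m. y i \<in> carrier_vec m" "\<forall>i<m. \<forall>j<m. ip (y i) (y j) = (if i = j then 1 else 0)"
     "\<forall>a<m. \<forall>b<m. B $$ (a,b) = (\<Sum>i<m. complex_of_real (dd i) * y i $ a * cnj (y i $ b))"
    using Suc.IH[OF B aB] by blast
  define z where "z l = vec n (\<lambda>a. \<Sum>k<m. y l $ k * w (Suc k) $ a)" for l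
  define u where "u i = (if i = 0 then v else z (i - 1))" for i
  define d where "d i = (if i = 0 then Re e else dd (i - 1))" for i
  have zc: "z l \<in> carrier_vec n" for l unfolding z_def by simp
  have uc: "\<forall>i<n. u i \<in> carrier_vec n" using v(1) zc by (simp add: u_def)
  have wSc: "\<And>k. k \<in> {..<m} \<Longrightarrow> w (Suc k) \<in> carrier_vec n" using wc by (auto simp: n_def)
  have ip_vz: "ip v (z l) = 0" for l
  proof -
    have "ip v (z l) = (\<Sum>k<m. y l $ k * ip (w 0) (w (Suc k)))"
      unfolding z_def using ip_lincomb[where K="{..<m}" and W="\<lambda>k. w (Suc k)" and x=v and \<beta>="\<lambda>k. y l $ k", OF wSc v(1)] w(2) by simp
    also have "\<dots> = 0" using w(3) by (simp add: n_def)
    finally show ?thesis .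
  qed
  have ip_zz: "ip (z l) (z l') = ip (y l) (y l')" if l: "l < m" "l' < m" for l l'
  proof -
    have "ip (z l) (z l') = (\<Sum>k<m. \<Sum>k'<m. cnj (y l $ k) * y l' $ k' * ip (w (Suc k)) (w (Suc k')))"
      unfolding z_def by (rule lincomb_ip[where K="{..<m}" and W="\<lambda>k. w (Suc k)", OF wSc]) auto
    also have "\<dots> = (\<Sum>k<m. \<Sum>k'<m. cnj (y l $ k) * y l' $ k' * (if k = k' then 1 else 0))"
      using w(3) by (intro sum.cong refl) (auto simp: n_def)
    also have "\<dots> = (\<Sum>k<m. cnj (y l $ k) * y l' $ k)"
      by (rule sum.cong, simp, subst sum_delta_mult, auto)
    also have "\<dots> = ip (y l) (y l')" using y(1) l by (auto simp: ip_def)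
    finally show ?thesis .
  qed
  have uon: "\<forall>i<n. \<forall>j<n. ip (u i) (u j) = (if i = j then 1 else 0)"
  proof (intro allI impI)
    fix i j assume ij: "i < n" "j < n"
    show "ip (u i) (u j) = (if i = j then 1 else 0)"
    proof (cases "i = 0"; cases "j = 0")
      assume "i = 0" "j = 0" thus ?thesis using v(2) by (simp add: u_def)
    next
      assume "i = 0" "j \<noteq> 0" thus ?thesis using ip_vz by (simp add: u_def)
    next
      assume "i \<noteq> 0" "j = 0" thus ?thesis using ip_vz ip_cnj[OF v(1) zc] by (simp add: u_def)
    next
      assume "i \<noteq> 0" "j \<noteq> 0" thus ?thesis using ip_zz[of "i - 1" "j - 1"] y(2) ij
        by (auto simp: u_def n_def)
    qed
  qed
  have Aeq: "A $$ (a,b) = (\<Sum>i<n. complex_of_real (d i) * u i $ a * cnj (u i $ b))" if ab: "a < n" "b < n" for a b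
  proof -
    have "A $$ (a,b) = w 0 $ a * e * cnj (w 0 $ b) + (\<Sum>i<m. \<Sum>j<m. w (Suc i) $ a * B $$ (i,j) * cnj (w (Suc j) $ b))"
      unfolding Aexp[OF ab] n_def sum.lessThan_Suc_shift using Q0 Q0' by (simp add: B_def n_def)
    also have "(\<Sum>i<m. \<Sum>j<m. w (Suc i) $ a * B $$ (i,j) * cnj (w (Suc j) $ b))
      = (\<Sum>i<m. \<Sum>j<m. w (Suc i) $ a * (\<Sum>l<m. complex_of_real (dd l) * y l $ i * cnj (y l $ j)) * cnj (w (Suc j) $ b))"
      using y(3) by simp
    also have "\<dots> = (\<Sum>l<m. complex_of_real (dd l) * (\<Sum>i<m. y l $ i * w (Suc i) $ a) * (\<Sum>j<m. cnj (y l $ j) * cnj (w (Suc j) $ b)))"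
      by (rule triple_rearr)
    also have "\<dots> = (\<Sum>l<m. complex_of_real (d (Suc l)) * u (Suc l) $ a * cnj (u (Suc l) $ b))"
      using ab by (simp add: d_def u_def z_def cnj_sum)
    finally show ?thesis unfolding n_def sum.lessThan_Suc_shift using er w(2)
      by (simp add: d_def u_def) (metis Reals_cnj_iff complex_is_Real_iff of_real_Re)
  qed
  show ?case using uc uon Aeq unfolding n_def by blast
qed

lemma sum_split_add: "(\<Sum>a<p+q. f a) = (\<Sum>a<p. f a) + (\<Sum>a<q. f (p+a))" for f :: "nat \<Rightarrow> 'b::comm_monoid_add"
  by (induction q) (auto simp: add.assoc)

lemma Ipq_carrier[simp]: "Ipq p q \<in> carrier_mat (p+q) (p+q)"
  by (simp add: Ipq_def)

lemma Ipq_index: "a < p+q \<Longrightarrow> b < p+q \<Longrightarrow> Ipq p q $$ (a,b) = (if a = b then (if a < p then 1 else -1) else 0)"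
  by (simp add: Ipq_def)

lemma adj_carrier[simp]: "A \<in> carrier_mat r c \<Longrightarrow> adj A \<in> carrier_mat c r"
  by (simp add: adj_def)

lemma adj_index: "i < dim_col A \<Longrightarrow> j < dim_row A \<Longrightarrow> adj A $$ (i,j) = cnj (A $$ (j,i))"
  by (simp add: adj_def)

lemma adj_Ipq: "adj (Ipq p q) = Ipq p q"
  by (rule eq_matI) (auto simp: adj_def Ipq_def)

lemma Ipq_mult_vec: "x \<in> carrier_vec (p+q) \<Longrightarrow> a < p+q \<Longrightarrow> (Ipq p q *\<^sub>v x) $ a = (if a < p then 1 else -1) * x $ a"
proof -
  assume x: "x \<in> carrier_vec (p+q)" and a: "a < p+q"
  have "(Ipq p q *\<^sub>v x) $ a = (\<Sum>d<p+q. Ipq p q $$ (a,d) * x $ d)" by (rule mv_index[OF Ipq_carrier x a])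
  also have "\<dots> = (\<Sum>d<p+q. (if a = d then (if a < p then 1 else -1) * x $ d else 0))"
    by (rule sum.cong) (auto simp: Ipq_index a)
  also have "\<dots> = (if a < p then 1 else -1) * x $ a" using a by simp
  finally show ?thesis .
qed

lemma Ipq_sq: "Ipq p q * Ipq p q = 1\<^sub>m (p+q)"
proof (rule eq_matI)
  fix i j assume "i < dim_row (1\<^sub>m (p+q))" "j < dim_col (1\<^sub>m (p+q))"
  hence ij: "i < p+q" "j < p+q" by auto
  have "(Ipq p q * Ipq p q) $$ (i,j) = (Ipq p q *\<^sub>v col (Ipq p q) j) $ i"
    using ij by (simp add: index_mult_mat index_mult_mat_vec Ipq_def)
  also have "\<dots> = (if i < p then 1 else -1) * col (Ipq p q) j $ i"
    using ij by (intro Ipq_mult_vec) auto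
  also have "\<dots> = 1\<^sub>m (p+q) $$ (i,j)" using ij by (simp add: Ipq_def col_def)
  finally show "(Ipq p q * Ipq p q) $$ (i,j) = 1\<^sub>m (p+q) $$ (i,j)" .
qed (auto simp: Ipq_def)

lemma ip_adj_move:
  assumes A: "A \<in> carrier_mat n n" and x: "x \<in> carrier_vec n" and y: "y \<in> carrier_vec n"
  shows "ip x (A *\<^sub>v y) = ip (adj A *\<^sub>v x) y"
proof -
  have aA: "adj A \<in> carrier_mat n n" using A by simp
  have "ip x (A *\<^sub>v y) = (\<Sum>a<n. \<Sum>b<n. cnj (x $ a) * A $$ (a,b) * y $ b)"
    unfolding ip_sum[OF x] by (rule sum.cong) (auto simp: mv_index[OF A y] sum_distrib_left mult_ac)
  also have "\<dots> = (\<Sum>b<n. \<Sum>a<n. cnj (x $ a) * A $$ (a,b) * y $ b)" by (rule sum.swap)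
  also have "\<dots> = (\<Sum>b<n. cnj ((adj A *\<^sub>v x) $ b) * y $ b)"
    by (rule sum.cong) (use A x in \<open>auto simp: mv_index[OF aA x] adj_index cnj_sum sum_distrib_right sum_distrib_left mult_ac\<close>)
  also have "\<dots> = ip (adj A *\<^sub>v x) y" using aA by (simp add: ip_def)
  finally show ?thesis .
qed

lemma ip_split:
  assumes u: "u \<in> carrier_vec (p+q)" and w: "w \<in> carrier_vec (p+q)"
  shows "ip w u = ip (vec_first w p) (vec_first u p) + ip (vec_last w q) (vec_last u q)"
    "ip w (Ipq p q *\<^sub>v u) = ip (vec_first w p) (vec_first u p) - ip (vec_last w q) (vec_last u q)"
proof -
  have f: "ip (vec_first w p) (vec_first u p) = (\<Sum>a<p. cnj (w $ a) * u $ a)"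
    by (simp add: ip_def vec_first_def)
  have l: "ip (vec_last w q) (vec_last u q) = (\<Sum>a<q. cnj (w $ (p+a)) * u $ (p+a))"
    using u w by (simp add: ip_def vec_last_def)
  show "ip w u = ip (vec_first w p) (vec_first u p) + ip (vec_last w q) (vec_last u q)"
    unfolding f l ip_sum[OF w] sum_split_add ..
  have "ip w (Ipq p q *\<^sub>v u) = (\<Sum>a<p+q. cnj (w $ a) * ((if a < p then 1 else -1) * u $ a))"
    unfolding ip_sum[OF w] by (rule sum.cong, simp, simp add: Ipq_mult_vec[OF u])
  also have "\<dots> = (\<Sum>a<p. cnj (w $ a) * u $ a) - (\<Sum>a<q. cnj (w $ (p+a)) * u $ (p+a))"
    unfolding sum_split_add by (simp add: sum_negf)
  finally show "ip w (Ipq p q *\<^sub>v u) = ip (vec_first w p) (vec_first u p) - ip (vec_last w q) (vec_last u q)"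
    unfolding f l .
qed

lemma mat_alg:
  fixes M J :: "complex mat"
  assumes M: "M \<in> carrier_mat n n" and J: "J \<in> carrier_mat n n"
    and MJM: "M * J * M = J" and JJ: "J * J = 1\<^sub>m n"
  shows "(M + J) * J * (M + J) = 2 \<cdot>\<^sub>m (M + J)" "(M + J) * J * (- M + J) = 0\<^sub>m n n"
proof -
  have MJ: "M * J \<in> carrier_mat n n" using M J by simp
  have MJM': "M * (J * M) = J" using MJM M J by (simp add: assoc_mult_mat[OF M J M])
  have e1: "(M + J) * J = M * J + 1\<^sub>m n" using add_mult_distrib_mat[OF M J J] JJ by simp
  have "(M * J + 1\<^sub>m n) * (M + J) = (M * J * M + 1\<^sub>m n * M) + (M * J * J + 1\<^sub>m n * J)"
    using M J MJ by (simp add: mult_add_distrib_mat[of _ n n] add_mult_distrib_mat[of _ n n])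
  also have "\<dots> = 2 \<cdot>\<^sub>m (M + J)" using M J MJM' JJ by (intro eq_matI) auto
  finally show "(M + J) * J * (M + J) = 2 \<cdot>\<^sub>m (M + J)" unfolding e1 .
  have "(M * J + 1\<^sub>m n) * (- M + J) = 0\<^sub>m n n"
    using M J MJ MJM' JJ
    apply (simp add: mult_add_distrib_mat[of _ n n] add_mult_distrib_mat[of _ n n])
    apply (rule eq_matI)
       apply auto
    done
  then show "(M + J) * J * (- M + J) = 0\<^sub>m n n" unfolding e1 .
qed

lemma smult_mat_vec: "A \<in> carrier_mat n n \<Longrightarrow> x \<in> carrier_vec n \<Longrightarrow> (c \<cdot>\<^sub>m A) *\<^sub>v x = c \<cdot>\<^sub>v (A *\<^sub>v x)"
  by (rule eq_vecI) (auto simp: index_mult_mat_vec scalar_prod_def sum_distrib_left mult.assoc)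

lemma sum_filter_idx:
  "(\<Sum>j<length (filter P [0..<n]). f (filter P [0..<n] ! j)) = (\<Sum>i<n. if P i then f i else (0::'a::comm_monoid_add))"
proof -
  have "(\<Sum>j<length (filter P [0..<n]). f (filter P [0..<n] ! j)) = sum_list (map f (filter P [0..<n]))"
    by (subst sum_list_sum_nth) (simp add: atLeast0LessThan)
  also have "\<dots> = sum_list (map (\<lambda>i. if P i then f i else 0) [0..<n])"
    by (subst sum_list_map_filter') simp
  also have "\<dots> = (\<Sum>i<n. if P i then f i else 0)"
    by (simp add: interv_sum_list_conv_sum_set_nat atLeast0LessThan)
  finally show ?thesis .
qed

lemma eig_of_rep:
  assumes N: "N \<in> carrier_mat n n" and uc: "\<forall>i<n. u i \<in> carrier_vec n"
   and on: "\<forall>i<n. \<forall>j<n. ip (u i) (u j) = (if i = j then 1 else 0)"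
   and rep: "\<forall>a<n. \<forall>b<n. N $$ (a,b) = (\<Sum>i<n. complex_of_real (d i) * u i $ a * cnj (u i $ b))"
   and j: "j < n"
  shows "N *\<^sub>v u j = complex_of_real (d j) \<cdot>\<^sub>v u j"
proof (rule eq_vecI)
  have ujc: "u j \<in> carrier_vec n" using uc j by auto
  show "dim_vec (N *\<^sub>v u j) = dim_vec (complex_of_real (d j) \<cdot>\<^sub>v u j)" using N ujc by simp
  fix a assume "a < dim_vec (complex_of_real (d j) \<cdot>\<^sub>v u j)"
  hence a: "a < n" using ujc by simp
  have "(N *\<^sub>v u j) $ a = (\<Sum>b<n. \<Sum>i<n. complex_of_real (d i) * u i $ a * (cnj (u i $ b) * u j $ b))"
    unfolding mv_index[OF N ujc a] by (rule sum.cong) (auto simp: rep a sum_distrib_right mult.assoc)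
  also have "\<dots> = (\<Sum>i<n. \<Sum>b<n. complex_of_real (d i) * u i $ a * (cnj (u i $ b) * u j $ b))"
    by (rule sum.swap)
  also have "\<dots> = (\<Sum>i<n. complex_of_real (d i) * u i $ a * ip (u i) (u j))"
    by (rule sum.cong) (use uc in \<open>auto simp: ip_sum sum_distrib_left\<close>)
  also have "\<dots> = (\<Sum>i<n. complex_of_real (d i) * u i $ a * (if i = j then 1 else 0))"
    by (rule sum.cong) (use on j in auto)
  also have "\<dots> = complex_of_real (d j) * u j $ a" using j by (simp add: sum_delta_mult2[where f = "\<lambda>i. complex_of_real (d i) * u i $ a"])
  finally show "(N *\<^sub>v u j) $ a = (complex_of_real (d j) \<cdot>\<^sub>v u j) $ a" using a ujc by simp
qed

lemma Jprop:
  fixes N :: "complex mat"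
  assumes N: "N \<in> carrier_mat (p+q) (p+q)" and hN: "adj N = N" and NJN: "N * Ipq p q * N = 2 \<cdot>\<^sub>m N"
   and uc: "\<forall>i<p+q. u i \<in> carrier_vec (p+q)"
   and on: "\<forall>i<p+q. \<forall>j<p+q. ip (u i) (u j) = (if i = j then 1 else 0)"
   and rep: "\<forall>a<p+q. \<forall>b<p+q. N $$ (a,b) = (\<Sum>i<p+q. complex_of_real (d i) * u i $ a * cnj (u i $ b))"
   and ij: "i < p+q" "j < p+q" and di: "d i \<noteq> 0" and dj: "d j \<noteq> 0"
  shows "ip (u i) (Ipq p q *\<^sub>v u j) = (if i = j then complex_of_real (2 / d i) else 0)"
proof -
  let ?J = "Ipq p q"
  have J: "?J \<in> carrier_mat (p+q) (p+q)" by simp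
  have ui: "u i \<in> carrier_vec (p+q)" and uj: "u j \<in> carrier_vec (p+q)" using uc ij by auto
  have evi: "N *\<^sub>v u i = complex_of_real (d i) \<cdot>\<^sub>v u i" by (rule eig_of_rep[OF N uc on rep ij(1)])
  have evj: "N *\<^sub>v u j = complex_of_real (d j) \<cdot>\<^sub>v u j" by (rule eig_of_rep[OF N uc on rep ij(2)])
  have dimJ: "dim_vec (?J *\<^sub>v u j) = dim_vec (u i)" using ui by (simp add: Ipq_def)
  have NJ: "N * ?J \<in> carrier_mat (p+q) (p+q)" using N J by simp
  have Nuj: "N *\<^sub>v u j \<in> carrier_vec (p+q)" using N uj by simp
  have "(N * ?J * N) *\<^sub>v u j = (N * ?J) *\<^sub>v (N *\<^sub>v u j)" by (rule assoc_mult_mat_vec[OF NJ N uj])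
  also have "\<dots> = N *\<^sub>v (?J *\<^sub>v (N *\<^sub>v u j))" by (rule assoc_mult_mat_vec[OF N J Nuj])
  finally have "ip (u i) ((N * ?J * N) *\<^sub>v u j) = ip (u i) (N *\<^sub>v (?J *\<^sub>v (N *\<^sub>v u j)))" by simp
  also have "\<dots> = ip (N *\<^sub>v u i) (?J *\<^sub>v (N *\<^sub>v u j))"
    using ip_adj_move[OF N ui, of "?J *\<^sub>v (N *\<^sub>v u j)"] hN J Nuj by simp
  also have "\<dots> = cnj (complex_of_real (d i)) * (complex_of_real (d j) * ip (u i) (?J *\<^sub>v u j))"
    unfolding evi evj mult_mat_vec[OF J uj] using ui uj ip_smult_right[OF dimJ]
    by (simp add: ip_smult_left)
  finally have L: "ip (u i) ((N * ?J * N) *\<^sub>v u j) = complex_of_real (d i) * complex_of_real (d j) * ip (u i) (?J *\<^sub>v u j)"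
    by simp
  have R: "ip (u i) ((N * ?J * N) *\<^sub>v u j) = 2 * complex_of_real (d j) * ip (u i) (u j)"
    unfolding NJN smult_mat_vec[OF N uj] evj using ui uj by (simp add: ip_smult_right)
  have eq: "complex_of_real (d i) * complex_of_real (d j) * ip (u i) (?J *\<^sub>v u j) = 2 * complex_of_real (d j) * (if i = j then 1 else 0)"
  proof -
    have o: "ip (u i) (u j) = (if i = j then 1 else 0)" using on ij by simp
    show ?thesis using L R unfolding o by metis
  qed
  show ?thesis
  proof (cases "i = j")
    case True
    with eq dj di show ?thesis by (simp add: field_simps)
  next
    case False
    with eq dj di show ?thesis by simp
  qed
qed

lemma assemble:
  fixes u :: "nat \<Rightarrow> complex vec" and d :: "nat \<Rightarrow> real" and N :: "complex mat"
  assumes uc: "\<forall>i<p+q. u i \<in> carrier_vec (p+q)"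
   and on: "\<forall>i<p+q. \<forall>j<p+q. ip (u i) (u j) = (if i = j then 1 else 0)"
   and Jp: "\<forall>i<p+q. \<forall>j<p+q. d i \<noteq> 0 \<longrightarrow> d j \<noteq> 0 \<longrightarrow> ip (u i) (Ipq p q *\<^sub>v u j) = (if i = j then complex_of_real (2 / d i) else 0)"
   and N: "N \<in> carrier_mat (p+q) (p+q)"
   and rep: "\<forall>a<p+q. \<forall>b<p+q. N $$ (a,b) = (\<Sum>i<p+q. complex_of_real (d i) * u i $ a * cnj (u i $ b))"
  shows "\<exists>zp zm. (\<forall>j<length (filter (\<lambda>i. d i \<noteq> 0) [0..<p+q]). zp j \<in> carrier_vec p \<and> zm j \<in> carrier_vec q)
      \<and> (\<forall>i<length (filter (\<lambda>i. d i \<noteq> 0) [0..<p+q]). \<forall>j<length (filter (\<lambda>i. d i \<noteq> 0) [0..<p+q]). i \<noteq> j \<longrightarrow> zp i \<bullet>c zp j = 0 \<and> zm i \<bullet>c zm j = 0)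
      \<and> (\<forall>j<length (filter (\<lambda>i. d i \<noteq> 0) [0..<p+q]). vnorm2 (zp j) + vnorm2 (zm j) = 1 \<and> vnorm2 (zp j) \<noteq> vnorm2 (zm j))
      \<and> N - Ipq p q = pq_matrix p q (length (filter (\<lambda>i. d i \<noteq> 0) [0..<p+q])) zp zm"
proof -
  define idx where "idx = filter (\<lambda>i. d i \<noteq> 0) [0..<p+q]"
  define k where "k = length idx"
  have idx_lt: "idx ! j < p+q" if "j < k" for j
    using that nth_mem[of j idx] unfolding k_def idx_def by auto
  have idx_d: "d (idx ! j) \<noteq> 0" if "j < k" for j
    using that nth_mem[of j idx] unfolding k_def idx_def by auto
  have idx_inj: "idx ! i \<noteq> idx ! j" if "i < k" "j < k" "i \<noteq> j" for i j
    using that nth_eq_iff_index_eq[of idx i j] unfolding k_def idx_def by auto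
  define zp where "zp j = vec_first (u (idx ! j)) p" for j
  define zm where "zm j = vec_last (u (idx ! j)) q" for j
  have uidx: "u (idx ! j) \<in> carrier_vec (p+q)" if "j < k" for j using uc idx_lt[OF that] by auto
  have app: "zp j @\<^sub>v zm j = u (idx ! j)" if "j < k" for j
    unfolding zp_def zm_def by (rule vec_first_last_append[OF uidx[OF that]])
  have F: "ip (u (idx ! j)) (u (idx ! i)) = ip (zp j) (zp i) + ip (zm j) (zm i)"
    "ip (u (idx ! j)) (Ipq p q *\<^sub>v u (idx ! i)) = ip (zp j) (zp i) - ip (zm j) (zm i)"
    if "i < k" "j < k" for i j
    unfolding zp_def zm_def using ip_split[OF uidx[OF that(1)] uidx[OF that(2)]] by auto
  have c1: "\<forall>j<k. zp j \<in> carrier_vec p \<and> zm j \<in> carrier_vec q"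
    unfolding zp_def zm_def by simp
  have c2: "\<forall>i<k. \<forall>j<k. i \<noteq> j \<longrightarrow> zp i \<bullet>c zp j = 0 \<and> zm i \<bullet>c zm j = 0"
  proof (intro allI impI)
    fix i j assume ij: "i < k" "j < k" "i \<noteq> j"
    have a: "ip (zp j) (zp i) + ip (zm j) (zm i) = 0"
      using F(1)[OF ij(1,2)] on idx_lt[OF ij(1)] idx_lt[OF ij(2)] idx_inj[OF ij(2,1)] ij by auto
    have b: "ip (zp j) (zp i) - ip (zm j) (zm i) = 0"
      using F(2)[OF ij(1,2)] Jp idx_lt[OF ij(1)] idx_lt[OF ij(2)] idx_inj[OF ij(2,1)] idx_d[OF ij(1)] idx_d[OF ij(2)] ij by auto
    have "ip (zp j) (zp i) = 0" "ip (zm j) (zm i) = 0" using a b by (auto simp: algebra_simps)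
    thus "zp i \<bullet>c zp j = 0 \<and> zm i \<bullet>c zm j = 0"
      using cip_ip[of "zp i" p "zp j"] cip_ip[of "zm i" q "zm j"] c1 ij by auto
  qed
  have nrm: "vnorm2 (zp j) + vnorm2 (zm j) = 1" "vnorm2 (zp j) - vnorm2 (zm j) = 2 / d (idx ! j)" if j: "j < k" for j
  proof -
    have a0: "ip (zp j) (zp j) + ip (zm j) (zm j) = 1"
      using F(1)[OF j j] on idx_lt[OF j] by simp
    have b0: "ip (zp j) (zp j) - ip (zm j) (zm j) = complex_of_real (2 / d (idx ! j))"
      using F(2)[OF j j] Jp idx_lt[OF j] idx_d[OF j] by simp
    have a: "complex_of_real (vnorm2 (zp j)) + complex_of_real (vnorm2 (zm j)) = 1"
      using a0 unfolding ip_self .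
    have b: "complex_of_real (vnorm2 (zp j)) - complex_of_real (vnorm2 (zm j)) = complex_of_real (2 / d (idx ! j))"
      using b0 unfolding ip_self .
    show "vnorm2 (zp j) + vnorm2 (zm j) = 1" using a by (metis of_real_1 of_real_add of_real_eq_iff)
    show "vnorm2 (zp j) - vnorm2 (zm j) = 2 / d (idx ! j)" using b by (metis of_real_diff of_real_eq_iff)
  qed
  have c3: "\<forall>j<k. vnorm2 (zp j) + vnorm2 (zm j) = 1 \<and> vnorm2 (zp j) \<noteq> vnorm2 (zm j)"
    using nrm idx_d by fastforce
  have lam: "2 / (vnorm2 (zp j) - vnorm2 (zm j)) = d (idx ! j)" if "j < k" for j
    using nrm(2)[OF that] idx_d[OF that] by simp
  have c4: "N - Ipq p q = pq_matrix p q k zp zm"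
  proof -
    have "N = mat (p+q) (p+q) (\<lambda>(a, b). \<Sum>j<k. complex_of_real (2 / (vnorm2 (zp j) - vnorm2 (zm j))) *
            (zp j @\<^sub>v zm j) $ a * cnj ((zp j @\<^sub>v zm j) $ b))"
    proof (rule eq_matI)
      fix a b assume "a < dim_row (mat (p+q) (p+q) (\<lambda>(a, b). \<Sum>j<k. complex_of_real (2 / (vnorm2 (zp j) - vnorm2 (zm j))) *
            (zp j @\<^sub>v zm j) $ a * cnj ((zp j @\<^sub>v zm j) $ b)))"
        "b < dim_col (mat (p+q) (p+q) (\<lambda>(a, b). \<Sum>j<k. complex_of_real (2 / (vnorm2 (zp j) - vnorm2 (zm j))) *
            (zp j @\<^sub>v zm j) $ a * cnj ((zp j @\<^sub>v zm j) $ b)))"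
      hence ab: "a < p+q" "b < p+q" by auto
      have "(\<Sum>j<k. complex_of_real (2 / (vnorm2 (zp j) - vnorm2 (zm j))) * (zp j @\<^sub>v zm j) $ a * cnj ((zp j @\<^sub>v zm j) $ b))
          = (\<Sum>j<k. (\<lambda>i. complex_of_real (d i) * u i $ a * cnj (u i $ b)) (idx ! j))"
        by (rule sum.cong) (auto simp: lam app)
      also have "\<dots> = (\<Sum>i<p+q. if d i \<noteq> 0 then complex_of_real (d i) * u i $ a * cnj (u i $ b) else 0)"
        unfolding k_def idx_def by (rule sum_filter_idx)
      also have "\<dots> = N $$ (a,b)" using rep ab by (auto intro!: sum.cong)
      finally show "N $$ (a,b) = mat (p+q) (p+q) (\<lambda>(a, b). \<Sum>j<k. complex_of_real (2 / (vnorm2 (zp j) - vnorm2 (zm j))) *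
            (zp j @\<^sub>v zm j) $ a * cnj ((zp j @\<^sub>v zm j) $ b)) $$ (a,b)" using ab by simp
    qed (use N in auto)
    thus ?thesis unfolding pq_matrix_def by simp
  qed
  show ?thesis using c1 c2 c3 c4 unfolding k_def idx_def by blast
qed

lemma Ipq_mv_carrier[simp]: "Ipq p q *\<^sub>v x \<in> carrier_vec (p+q)"
  by (rule carrier_vecI) (simp add: Ipq_def)

lemma idx_facts:
  assumes "j < length (filter P [0..<n])"
  shows "filter P [0..<n] ! j < n" "P (filter P [0..<n] ! j)"
  using nth_mem[OF assms] by auto

lemma idx_inj:
  assumes "i < length (filter P [0..<n])" "j < length (filter P [0..<n])" "filter P [0..<n] ! i = filter P [0..<n] ! j"
  shows "i = j"
  using nth_eq_iff_index_eq[of "filter P [0..<n]" i j] assms by auto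

lemma onb_card:
  fixes f :: "nat \<Rightarrow> complex vec"
  assumes fc: "\<forall>i<m. f i \<in> carrier_vec n" and on: "\<forall>i<m. \<forall>j<m. ip (f i) (f j) = (if i = j then 1 else 0)"
  shows "m \<le> n"
proof (rule ccontr)
  assume "\<not> m \<le> n" hence nm: "n < m" by simp
  define G where "G = mat m m (\<lambda>(a,i). if a < n then f i $ a else 0)"
  have G: "G \<in> carrier_mat m m" unfolding G_def by simp
  have aG: "adj G \<in> carrier_mat m m" using G by simp
  have "adj G * G = 1\<^sub>m m"
  proof (rule eq_matI)
    fix i j assume "i < dim_row (1\<^sub>m m)" "j < dim_col (1\<^sub>m m)"
    hence ij: "i < m" "j < m" by auto
    have "(adj G * G) $$ (i,j) = (\<Sum>a<m. if a < n then cnj (f i $ a) * f j $ a else 0)"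
      using ij G aG by (auto simp: index_mult_mat adj_def G_def scalar_prod_def atLeast0LessThan intro!: sum.cong)
    also have "\<dots> = (\<Sum>a<n. cnj (f i $ a) * f j $ a)"
      using nm by (simp add: sum.If_cases) (rule sum.cong, auto)
    also have "\<dots> = ip (f i) (f j)" using fc ij by (auto simp: ip_def)
    finally show "(adj G * G) $$ (i,j) = 1\<^sub>m m $$ (i,j)" using on ij by simp
  qed (use G aG in \<open>auto simp: adj_def\<close>)
  hence "det (adj G) * det G = 1" using det_mult[OF aG G] by simp
  moreover have "det G = 0"
  proof -
    have "G = mat\<^sub>r m m (\<lambda>i. if i = n then 0\<^sub>v m else row G i)"
      by (rule eq_matI) (auto simp: G_def)
    also have "det \<dots> = 0" by (rule det_row_0[OF nm]) (use G in auto)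
    finally show ?thesis .
  qed
  ultimately show False by simp
qed

lemma ip_Ipq_Ipq: "x \<in> carrier_vec (p+q) \<Longrightarrow> y \<in> carrier_vec (p+q) \<Longrightarrow> ip (Ipq p q *\<^sub>v x) (Ipq p q *\<^sub>v y) = ip x y"
proof -
  assume x: "x \<in> carrier_vec (p+q)" and y: "y \<in> carrier_vec (p+q)"
  have Jx: "Ipq p q *\<^sub>v x \<in> carrier_vec (p+q)" using x by simp
  have "ip (Ipq p q *\<^sub>v x) (Ipq p q *\<^sub>v y) = ip (adj (Ipq p q) *\<^sub>v (Ipq p q *\<^sub>v x)) y"
    by (rule ip_adj_move[OF Ipq_carrier Jx y])
  also have "adj (Ipq p q) *\<^sub>v (Ipq p q *\<^sub>v x) = (Ipq p q * Ipq p q) *\<^sub>v x"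
    unfolding adj_Ipq by (rule assoc_mult_mat_vec[symmetric, OF Ipq_carrier Ipq_carrier x])
  also have "\<dots> = x" unfolding Ipq_sq using x by simp
  finally show ?thesis .
qed

lemma sandwich:
  fixes N1 N2 :: "complex mat"
  assumes N1: "N1 \<in> carrier_mat (p+q) (p+q)" and h1: "adj N1 = N1" and N2: "N2 \<in> carrier_mat (p+q) (p+q)"
    and x: "x \<in> carrier_vec (p+q)" and y: "y \<in> carrier_vec (p+q)"
    and ex: "N1 *\<^sub>v x = c1 \<cdot>\<^sub>v x" and ey: "N2 *\<^sub>v y = c2 \<cdot>\<^sub>v y"
  shows "ip x ((N1 * Ipq p q * N2) *\<^sub>v y) = cnj c1 * c2 * ip x (Ipq p q *\<^sub>v y)"
proof -
  let ?J = "Ipq p q"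
  have J: "?J \<in> carrier_mat (p+q) (p+q)" by simp
  have dimJ: "dim_vec (?J *\<^sub>v y) = dim_vec x" using x by (simp add: Ipq_def)
  have NJ: "N1 * ?J \<in> carrier_mat (p+q) (p+q)" using N1 J by simp
  have Ny: "N2 *\<^sub>v y \<in> carrier_vec (p+q)" using N2 y by simp
  have JNy: "?J *\<^sub>v (N2 *\<^sub>v y) \<in> carrier_vec (p+q)" using J Ny by simp
  have "(N1 * ?J * N2) *\<^sub>v y = (N1 * ?J) *\<^sub>v (N2 *\<^sub>v y)" by (rule assoc_mult_mat_vec[OF NJ N2 y])
  also have "\<dots> = N1 *\<^sub>v (?J *\<^sub>v (N2 *\<^sub>v y))" by (rule assoc_mult_mat_vec[OF N1 J Ny])
  finally have "ip x ((N1 * ?J * N2) *\<^sub>v y) = ip x (N1 *\<^sub>v (?J *\<^sub>v (N2 *\<^sub>v y)))" by simp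
  also have "\<dots> = ip (N1 *\<^sub>v x) (?J *\<^sub>v (N2 *\<^sub>v y))"
    using ip_adj_move[OF N1 x JNy] h1 by simp
  also have "\<dots> = cnj c1 * (c2 * ip x (?J *\<^sub>v y))"
    unfolding ex ey mult_mat_vec[OF J y] using ip_smult_right[OF dimJ] by (simp add: ip_smult_left)
  finally show ?thesis by simp
qed

lemma adj_add: "A \<in> carrier_mat n n \<Longrightarrow> B \<in> carrier_mat n n \<Longrightarrow> adj (A + B) = adj A + adj B"
  by (rule eq_matI) (auto simp: adj_def)

lemma adj_uminus: "A \<in> carrier_mat n n \<Longrightarrow> adj (- A) = - adj A"
  by (rule eq_matI) (auto simp: adj_def)

lemma mm_index: "A \<in> carrier_mat n n \<Longrightarrow> B \<in> carrier_mat n n \<Longrightarrow> a < n \<Longrightarrow> b < n \<Longrightarrow>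
  (A * B) $$ (a,b) = (\<Sum>c<n. A $$ (a,c) * B $$ (c,b))"
  by (simp add: index_mult_mat scalar_prod_def atLeast0LessThan)

lemma rearr2:
  fixes A D S :: "_ \<Rightarrow> complex"
  shows "(\<Sum>c\<in>C. (\<Sum>i\<in>I. A i * B i c) * S c * (\<Sum>j\<in>J. E j c * D j))
       = (\<Sum>i\<in>I. \<Sum>j\<in>J. A i * D j * (\<Sum>c\<in>C. B i c * S c * E j c))"
proof -
  have "(\<Sum>c\<in>C. (\<Sum>i\<in>I. A i * B i c) * S c * (\<Sum>j\<in>J. E j c * D j))
      = (\<Sum>c\<in>C. \<Sum>i\<in>I. \<Sum>j\<in>J. A i * D j * (B i c * S c * E j c))"
    by (simp add: sum_distrib_left sum_distrib_right mult_ac)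
  also have "\<dots> = (\<Sum>i\<in>I. \<Sum>c\<in>C. \<Sum>j\<in>J. A i * D j * (B i c * S c * E j c))" by (rule sum.swap)
  also have "\<dots> = (\<Sum>i\<in>I. \<Sum>j\<in>J. \<Sum>c\<in>C. A i * D j * (B i c * S c * E j c))"
    by (rule sum.cong, simp, rule sum.swap)
  also have "\<dots> = (\<Sum>i\<in>I. \<Sum>j\<in>J. A i * D j * (\<Sum>c\<in>C. B i c * S c * E j c))"
    by (simp add: sum_distrib_left)
  finally show ?thesis .
qed

lemma NJN_suff:
  fixes z :: "nat \<Rightarrow> complex vec" and lam :: "nat \<Rightarrow> real"
  assumes zc: "\<forall>j<k. z j \<in> carrier_vec (p+q)"
    and lam0: "\<forall>j<k. lam j \<noteq> 0"
    and Jp: "\<forall>i<k. \<forall>j<k. ip (z i) (Ipq p q *\<^sub>v z j) = (if i = j then complex_of_real (2 / lam i) else 0)"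
  defines "N \<equiv> mat (p+q) (p+q) (\<lambda>(a,b). \<Sum>j<k. complex_of_real (lam j) * z j $ a * cnj (z j $ b))"
  shows "N * Ipq p q * N = 2 \<cdot>\<^sub>m N"
proof (rule eq_matI)
  let ?J = "Ipq p q"
  let ?s = "\<lambda>c. if c < p then 1 else - 1 :: complex"
  have N: "N \<in> carrier_mat (p+q) (p+q)" unfolding N_def by simp
  have NJ: "N * ?J \<in> carrier_mat (p+q) (p+q)" using N by simp
  fix a b assume "a < dim_row (2 \<cdot>\<^sub>m N)" "b < dim_col (2 \<cdot>\<^sub>m N)"
  hence ab: "a < p+q" "b < p+q" using N by auto
  have NJi: "(N * ?J) $$ (a,c) = N $$ (a,c) * ?s c" if c: "c < p+q" for c
  proof -
    have "(N * ?J) $$ (a,c) = (\<Sum>e<p+q. N $$ (a,e) * ?J $$ (e,c))" by (rule mm_index[OF N Ipq_carrier ab(1) c])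
    also have "\<dots> = (\<Sum>e<p+q. if e = c then N $$ (a,e) * ?s c else 0)"
      by (rule sum.cong) (auto simp: Ipq_index c)
    also have "\<dots> = N $$ (a,c) * ?s c" using c by simp
    finally show ?thesis .
  qed
  have inner: "(\<Sum>c<p+q. cnj (z i $ c) * ?s c * (complex_of_real (lam j) * z j $ c))
     = complex_of_real (lam j) * ip (z i) (?J *\<^sub>v z j)" if ij: "i < k" "j < k" for i j
  proof -
    have zi: "z i \<in> carrier_vec (p+q)" and zj: "z j \<in> carrier_vec (p+q)" using zc ij by auto
    show ?thesis unfolding ip_sum[OF zi] sum_distrib_left
      by (rule sum.cong) (auto simp: Ipq_mult_vec[OF zj] mult_ac)
  qed
  have "(N * ?J * N) $$ (a,b) = (\<Sum>c<p+q. (N * ?J) $$ (a,c) * N $$ (c,b))"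
    by (rule mm_index[OF NJ N ab])
  also have "\<dots> = (\<Sum>c<p+q. (\<Sum>i<k. (complex_of_real (lam i) * z i $ a) * cnj (z i $ c)) * ?s c
        * (\<Sum>j<k. (complex_of_real (lam j) * z j $ c) * cnj (z j $ b)))"
    by (rule sum.cong[OF refl], subst NJi; auto simp: N_def ab mult_ac)
  also have "\<dots> = (\<Sum>i<k. \<Sum>j<k. (complex_of_real (lam i) * z i $ a) * cnj (z j $ b) *
        (\<Sum>c<p+q. cnj (z i $ c) * ?s c * (complex_of_real (lam j) * z j $ c)))"
    by (rule rearr2)
  also have "\<dots> = (\<Sum>i<k. \<Sum>j<k. (complex_of_real (lam i) * z i $ a) * cnj (z j $ b) *
        (complex_of_real (lam j) * (if i = j then complex_of_real (2 / lam i) else 0)))"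
    by (intro sum.cong refl) (simp add: inner Jp)
  also have "\<dots> = (\<Sum>i<k. 2 * (complex_of_real (lam i) * z i $ a * cnj (z i $ b)))"
  proof (rule sum.cong[OF refl])
    fix i assume i: "i \<in> {..<k}"
    have "(\<Sum>j<k. (complex_of_real (lam i) * z i $ a) * cnj (z j $ b) *
        (complex_of_real (lam j) * (if i = j then complex_of_real (2 / lam i) else 0)))
       = (\<Sum>j<k. if i = j then (complex_of_real (lam i) * z i $ a) * cnj (z j $ b) *
        (complex_of_real (lam j) * complex_of_real (2 / lam i)) else 0)"
      by (rule sum.cong) auto
    also have "\<dots> = (complex_of_real (lam i) * z i $ a) * cnj (z i $ b) * (complex_of_real (lam i) * complex_of_real (2 / lam i))"
      using i by simp
    also have "\<dots> = 2 * (complex_of_real (lam i) * z i $ a * cnj (z i $ b))"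
      using lam0 i by (simp flip: of_real_mult add: field_simps)
    finally show "(\<Sum>j<k. (complex_of_real (lam i) * z i $ a) * cnj (z j $ b) *
        (complex_of_real (lam j) * (if i = j then complex_of_real (2 / lam i) else 0))) = 2 * (complex_of_real (lam i) * z i $ a * cnj (z i $ b))" .
  qed
  also have "\<dots> = (2 \<cdot>\<^sub>m N) $$ (a,b)" using ab by (simp add: N_def sum_distrib_left)
  finally show "(N * ?J * N) $$ (a,b) = (2 \<cdot>\<^sub>m N) $$ (a,b)" .
qed (auto simp: N_def)

lemma mat_alg2:
  fixes N J :: "complex mat"
  assumes N: "N \<in> carrier_mat n n" and J: "J \<in> carrier_mat n n"
    and NJN: "N * J * N = 2 \<cdot>\<^sub>m N" and JJ: "J * J = 1\<^sub>m n"
  shows "(N - J) * J * (N - J) = J"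
proof -
  have NJ: "N * J \<in> carrier_mat n n" using N J by simp
  have NJN': "N * (J * N) = 2 \<cdot>\<^sub>m N" using NJN N J by (simp add: assoc_mult_mat[OF N J N])
  have e0: "N - J = N + (- J)" using N J by (intro eq_matI) auto
  have e1: "(N + (- J)) * J = N * J + (- 1\<^sub>m n)" using add_mult_distrib_mat[OF N _ J, of "- J"] J JJ by simp
  have "(N * J + (- 1\<^sub>m n)) * (N + (- J)) = J"
    using N J NJ NJN' JJ
    apply (simp add: mult_add_distrib_mat[of _ n n] add_mult_distrib_mat[of _ n n])
    apply (rule eq_matI)
       apply auto
    done
  thus ?thesis unfolding e0 e1 .
qed

lemma Ipq_dims[simp]: "dim_row (Ipq p q) = p+q" "dim_col (Ipq p q) = p+q"
  by (simp_all add: Ipq_def)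

lemma adj_minus: "A \<in> carrier_mat n n \<Longrightarrow> B \<in> carrier_mat n n \<Longrightarrow> adj (A - B) = adj A - adj B"
  by (rule eq_matI) (auto simp: adj_def)

lemma vec_first_app: "x \<in> carrier_vec p \<Longrightarrow> y \<in> carrier_vec q \<Longrightarrow> vec_first (x @\<^sub>v y) p = x"
  by (rule eq_vecI) (auto simp: vec_first_def)

lemma vec_last_app: "x \<in> carrier_vec p \<Longrightarrow> y \<in> carrier_vec q \<Longrightarrow> vec_last (x @\<^sub>v y) q = y"
  by (rule eq_vecI) (auto simp: vec_last_def)

theorem lemma3p4:
  fixes p q :: nat and M :: "complex mat"
  assumes "0 < p" and "p \<le> q" and "M \<in> carrier_mat (p+q) (p+q)"
  shows "(M = adj M \<and> adj M * Ipq p q * M = Ipq p q) \<longleftrightarrow>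
    (\<exists>k zp zm. k \<le> q
      \<and> (\<forall>j<k. zp j \<in> carrier_vec p \<and> zm j \<in> carrier_vec q)
      \<and> (\<forall>i<k. \<forall>j<k. i \<noteq> j \<longrightarrow> zp i \<bullet>c zp j = 0 \<and> zm i \<bullet>c zm j = 0)
      \<and> (\<forall>j<k. vnorm2 (zp j) + vnorm2 (zm j) = 1 \<and> vnorm2 (zp j) \<noteq> vnorm2 (zm j))
      \<and> (M = pq_matrix p q k zp zm \<or> - M = pq_matrix p q k zp zm))"
proof -
  let ?J = "Ipq p q"
  have M: "M \<in> carrier_mat (p+q) (p+q)" using assms(3) .
  have J: "?J \<in> carrier_mat (p+q) (p+q)" by simp
  show ?thesis
  proof
    assume H: "M = adj M \<and> adj M * ?J * M = ?J"
    have hM: "adj M = M" using H by simp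
    have MJM: "M * ?J * M = ?J" using H hM by metis
    note JJ = Ipq_sq[of p q]
    have mM: "- M \<in> carrier_mat (p+q) (p+q)" using M by simp
    have MJM2: "(- M) * ?J * (- M) = ?J" using MJM M by simp
    define N1 where "N1 = M + ?J"
    define N2 where "N2 = - M + ?J"
    have N1: "N1 \<in> carrier_mat (p+q) (p+q)" unfolding N1_def using M by simp
    have N2: "N2 \<in> carrier_mat (p+q) (p+q)" unfolding N2_def using M by simp
    have A1: "N1 * ?J * N1 = 2 \<cdot>\<^sub>m N1" and A12: "N1 * ?J * N2 = 0\<^sub>m (p+q) (p+q)"
      unfolding N1_def N2_def using mat_alg[OF M J MJM JJ] by auto
    have A2: "N2 * ?J * N2 = 2 \<cdot>\<^sub>m N2" unfolding N2_def using mat_alg(1)[OF mM J MJM2 JJ] .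
    have h1: "adj N1 = N1" unfolding N1_def using adj_add[OF M J] hM adj_Ipq by simp
    have h2: "adj N2 = N2" unfolding N2_def using adj_add[OF mM J] adj_uminus[OF M] hM adj_Ipq by simp
    obtain u1 d1 where s1: "\<forall>i<p+q. u1 i \<in> carrier_vec (p+q)"
      "\<forall>i<p+q. \<forall>j<p+q. ip (u1 i) (u1 j) = (if i = j then 1 else 0)"
      "\<forall>a<p+q. \<forall>b<p+q. N1 $$ (a,b) = (\<Sum>i<p+q. complex_of_real (d1 i) * u1 i $ a * cnj (u1 i $ b))"
      using spectral[OF N1 h1] by blast
    obtain u2 d2 where s2: "\<forall>i<p+q. u2 i \<in> carrier_vec (p+q)"
      "\<forall>i<p+q. \<forall>j<p+q. ip (u2 i) (u2 j) = (if i = j then 1 else 0)"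
      "\<forall>a<p+q. \<forall>b<p+q. N2 $$ (a,b) = (\<Sum>i<p+q. complex_of_real (d2 i) * u2 i $ a * cnj (u2 i $ b))"
      using spectral[OF N2 h2] by blast
    have Jp1: "\<forall>i<p+q. \<forall>j<p+q. d1 i \<noteq> 0 \<longrightarrow> d1 j \<noteq> 0 \<longrightarrow> ip (u1 i) (?J *\<^sub>v u1 j) = (if i = j then complex_of_real (2 / d1 i) else 0)"
      using Jprop[OF N1 h1 A1 s1] by blast
    have Jp2: "\<forall>i<p+q. \<forall>j<p+q. d2 i \<noteq> 0 \<longrightarrow> d2 j \<noteq> 0 \<longrightarrow> ip (u2 i) (?J *\<^sub>v u2 j) = (if i = j then complex_of_real (2 / d2 i) else 0)"
      using Jprop[OF N2 h2 A2 s2] by blast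
    define idx1 where "idx1 = filter (\<lambda>i. d1 i \<noteq> 0) [0..<p+q]"
    define idx2 where "idx2 = filter (\<lambda>i. d2 i \<noteq> 0) [0..<p+q]"
    define k1 where "k1 = length idx1"
    define k2 where "k2 = length idx2"
    obtain zp1 zm1 where R1: "(\<forall>j<k1. zp1 j \<in> carrier_vec p \<and> zm1 j \<in> carrier_vec q)"
      "(\<forall>i<k1. \<forall>j<k1. i \<noteq> j \<longrightarrow> zp1 i \<bullet>c zp1 j = 0 \<and> zm1 i \<bullet>c zm1 j = 0)"
      "(\<forall>j<k1. vnorm2 (zp1 j) + vnorm2 (zm1 j) = 1 \<and> vnorm2 (zp1 j) \<noteq> vnorm2 (zm1 j))"
      "N1 - ?J = pq_matrix p q k1 zp1 zm1"
      using assemble[OF s1(1) s1(2) Jp1 N1 s1(3)] unfolding k1_def idx1_def by blast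
    obtain zp2 zm2 where R2: "(\<forall>j<k2. zp2 j \<in> carrier_vec p \<and> zm2 j \<in> carrier_vec q)"
      "(\<forall>i<k2. \<forall>j<k2. i \<noteq> j \<longrightarrow> zp2 i \<bullet>c zp2 j = 0 \<and> zm2 i \<bullet>c zm2 j = 0)"
      "(\<forall>j<k2. vnorm2 (zp2 j) + vnorm2 (zm2 j) = 1 \<and> vnorm2 (zp2 j) \<noteq> vnorm2 (zm2 j))"
      "N2 - ?J = pq_matrix p q k2 zp2 zm2"
      using assemble[OF s2(1) s2(2) Jp2 N2 s2(3)] unfolding k2_def idx2_def by blast
    have eq1: "N1 - ?J = M" unfolding N1_def using M by (intro eq_matI) auto
    have eq2: "N2 - ?J = - M" unfolding N2_def using M by (intro eq_matI) auto
    have cross: "ip (u1 a) (?J *\<^sub>v u2 b) = 0" if ab: "a < p+q" "b < p+q" "d1 a \<noteq> 0" "d2 b \<noteq> 0" for a b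
    proof -
      have ua: "u1 a \<in> carrier_vec (p+q)" and ub: "u2 b \<in> carrier_vec (p+q)" using s1(1) s2(1) ab by auto
      have z0: "0\<^sub>m (p+q) (p+q) *\<^sub>v u2 b = 0\<^sub>v (p+q)"
        by (rule eq_vecI) (use ub in \<open>auto simp: index_mult_mat_vec scalar_prod_def\<close>)
      have "ip (u1 a) ((N1 * ?J * N2) *\<^sub>v u2 b) = cnj (complex_of_real (d1 a)) * complex_of_real (d2 b) * ip (u1 a) (?J *\<^sub>v u2 b)"
        by (rule sandwich[OF N1 h1 N2 ua ub eig_of_rep[OF N1 s1 ab(1)] eig_of_rep[OF N2 s2 ab(2)]])
      moreover have "ip (u1 a) ((N1 * ?J * N2) *\<^sub>v u2 b) = 0" unfolding A12 z0 using ua by (simp add: ip_def)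
      ultimately show ?thesis using ab by simp
    qed
    have count: "k1 + k2 \<le> p + q"
    proof -
      define f where "f j = (if j < k1 then u1 (idx1 ! j) else ?J *\<^sub>v u2 (idx2 ! (j - k1)))" for j
      have i1: "idx1 ! j < p+q" "d1 (idx1 ! j) \<noteq> 0" if "j < k1" for j
        using idx_facts[of j "\<lambda>i. d1 i \<noteq> 0" "p+q"] that unfolding k1_def idx1_def by auto
      have i2: "idx2 ! j < p+q" "d2 (idx2 ! j) \<noteq> 0" if "j < k2" for j
        using idx_facts[of j "\<lambda>i. d2 i \<noteq> 0" "p+q"] that unfolding k2_def idx2_def by auto
      have in1: "i = j" if "i < k1" "j < k1" "idx1 ! i = idx1 ! j" for i j
        using idx_inj[of i "\<lambda>i. d1 i \<noteq> 0" "p+q" j] that unfolding k1_def idx1_def by auto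
      have in2: "i = j" if "i < k2" "j < k2" "idx2 ! i = idx2 ! j" for i j
        using idx_inj[of i "\<lambda>i. d2 i \<noteq> 0" "p+q" j] that unfolding k2_def idx2_def by auto
      have fc: "\<forall>i<k1+k2. f i \<in> carrier_vec (p+q)"
        using s1(1) i1 by (auto simp: f_def)
      have fon: "\<forall>i<k1+k2. \<forall>j<k1+k2. ip (f i) (f j) = (if i = j then 1 else 0)"
      proof (intro allI impI)
        fix i j assume ij: "i < k1+k2" "j < k1+k2"
        show "ip (f i) (f j) = (if i = j then 1 else 0)"
        proof (cases "i < k1"; cases "j < k1")
          assume a: "i < k1" "j < k1"
          thus ?thesis using s1(2) i1[OF a(1)] i1[OF a(2)] in1[OF a] by (auto simp: f_def)
        next
          assume a: "\<not> i < k1" "\<not> j < k1"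
          hence b: "i - k1 < k2" "j - k1 < k2" using ij by auto
          have "ip (f i) (f j) = ip (u2 (idx2 ! (i - k1))) (u2 (idx2 ! (j - k1)))"
            using a s2(1) i2[OF b(1)] i2[OF b(2)] by (simp add: f_def ip_Ipq_Ipq)
          thus ?thesis using s2(2) i2[OF b(1)] i2[OF b(2)] in2[OF b] a by auto
        next
          assume a: "i < k1" "\<not> j < k1"
          hence b: "j - k1 < k2" using ij by auto
          show ?thesis using a cross[OF i1(1)[OF a(1)] i2(1)[OF b] i1(2)[OF a(1)] i2(2)[OF b]]
            by (simp add: f_def)
        next
          assume a: "\<not> i < k1" "j < k1"
          hence b: "i - k1 < k2" using ij by auto
          have "ip (f i) (f j) = cnj (ip (f j) (f i))"
            by (rule ip_cnj[of _ "p+q"]) (use fc ij in auto)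
          thus ?thesis using a cross[OF i1(1)[OF a(2)] i2(1)[OF b] i1(2)[OF a(2)] i2(2)[OF b]]
            by (simp add: f_def)
        qed
      qed
      show ?thesis by (rule onb_card[OF fc fon])
    qed
    show "\<exists>k zp zm. k \<le> q
      \<and> (\<forall>j<k. zp j \<in> carrier_vec p \<and> zm j \<in> carrier_vec q)
      \<and> (\<forall>i<k. \<forall>j<k. i \<noteq> j \<longrightarrow> zp i \<bullet>c zp j = 0 \<and> zm i \<bullet>c zm j = 0)
      \<and> (\<forall>j<k. vnorm2 (zp j) + vnorm2 (zm j) = 1 \<and> vnorm2 (zp j) \<noteq> vnorm2 (zm j))
      \<and> (M = pq_matrix p q k zp zm \<or> - M = pq_matrix p q k zp zm)"
    proof (cases "k1 \<le> q")
      case True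
      thus ?thesis using R1 eq1 by (intro exI[of _ k1] exI[of _ zp1] exI[of _ zm1]) auto
    next
      case False
      hence "k2 \<le> q" using count assms(2) by linarith
      thus ?thesis using R2 eq2 by (intro exI[of _ k2] exI[of _ zp2] exI[of _ zm2]) auto
    qed
  next
    assume "\<exists>k zp zm. k \<le> q
      \<and> (\<forall>j<k. zp j \<in> carrier_vec p \<and> zm j \<in> carrier_vec q)
      \<and> (\<forall>i<k. \<forall>j<k. i \<noteq> j \<longrightarrow> zp i \<bullet>c zp j = 0 \<and> zm i \<bullet>c zm j = 0)
      \<and> (\<forall>j<k. vnorm2 (zp j) + vnorm2 (zm j) = 1 \<and> vnorm2 (zp j) \<noteq> vnorm2 (zm j))
      \<and> (M = pq_matrix p q k zp zm \<or> - M = pq_matrix p q k zp zm)"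
    then obtain k zp zm where c1: "\<forall>j<k. zp j \<in> carrier_vec p \<and> zm j \<in> carrier_vec q"
      and c2: "\<forall>i<k. \<forall>j<k. i \<noteq> j \<longrightarrow> zp i \<bullet>c zp j = 0 \<and> zm i \<bullet>c zm j = 0"
      and c3: "\<forall>j<k. vnorm2 (zp j) + vnorm2 (zm j) = 1 \<and> vnorm2 (zp j) \<noteq> vnorm2 (zm j)"
      and c4: "M = pq_matrix p q k zp zm \<or> - M = pq_matrix p q k zp zm" by blast
    define z where "z j = zp j @\<^sub>v zm j" for j
    define lam where "lam j = 2 / (vnorm2 (zp j) - vnorm2 (zm j))" for j
    have zc: "\<forall>j<k. z j \<in> carrier_vec (p+q)" using c1 by (auto simp: z_def)
    have lam0: "\<forall>j<k. lam j \<noteq> 0" using c3 by (auto simp: lam_def)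
    have Jp: "\<forall>i<k. \<forall>j<k. ip (z i) (?J *\<^sub>v z j) = (if i = j then complex_of_real (2 / lam i) else 0)"
    proof (intro allI impI)
      fix i j assume ij: "i < k" "j < k"
      have zi: "z i \<in> carrier_vec (p+q)" and zj: "z j \<in> carrier_vec (p+q)" using zc ij by auto
      have pi: "zp i \<in> carrier_vec p" "zm i \<in> carrier_vec q" and pj: "zp j \<in> carrier_vec p" "zm j \<in> carrier_vec q"
        using c1 ij by auto
      have e: "ip (z i) (?J *\<^sub>v z j) = ip (zp i) (zp j) - ip (zm i) (zm j)"
        using ip_split(2)[OF zj zi] unfolding z_def vec_first_app[OF pi] vec_last_app[OF pi]
          vec_first_app[OF pj] vec_last_app[OF pj] .
      show "ip (z i) (?J *\<^sub>v z j) = (if i = j then complex_of_real (2 / lam i) else 0)"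
      proof (cases "i = j")
        case True
        have "vnorm2 (zp i) - vnorm2 (zm i) \<noteq> 0" using c3 ij by auto
        hence "2 / lam i = vnorm2 (zp i) - vnorm2 (zm i)" by (simp add: lam_def)
        thus ?thesis using e True by (simp add: ip_self)
      next
        case False
        have "zp j \<bullet>c zp i = 0" "zm j \<bullet>c zm i = 0" using c2 ij False by auto
        hence "ip (zp i) (zp j) = 0" "ip (zm i) (zm j) = 0"
          using cip_ip[OF pj(1) pi(1)] cip_ip[OF pj(2) pi(2)] by auto
        thus ?thesis using e False by simp
      qed
    qed
    define N where "N = mat (p+q) (p+q) (\<lambda>(a,b). \<Sum>j<k. complex_of_real (lam j) * z j $ a * cnj (z j $ b))"
    have N: "N \<in> carrier_mat (p+q) (p+q)" unfolding N_def by simp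
    have NJN: "N * ?J * N = 2 \<cdot>\<^sub>m N" unfolding N_def by (rule NJN_suff[OF zc lam0 Jp])
    have hN: "adj N = N" unfolding N_def by (rule eq_matI) (auto simp: adj_def cnj_sum mult_ac)
    have pqN: "pq_matrix p q k zp zm = N - ?J" unfolding pq_matrix_def N_def z_def lam_def by (rule refl)
    define X where "X = N - ?J"
    have X: "X \<in> carrier_mat (p+q) (p+q)" unfolding X_def by (rule minus_carrier_mat[OF J])
    have hX: "adj X = X" unfolding X_def adj_minus[OF N J] hN adj_Ipq ..
    have XJX: "X * ?J * X = ?J" unfolding X_def by (rule mat_alg2[OF N J NJN Ipq_sq])
    have pqX: "pq_matrix p q k zp zm = X" unfolding X_def by (rule pqN)
    from c4 show "M = adj M \<and> adj M * ?J * M = ?J"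
    proof
      assume "M = pq_matrix p q k zp zm"
      hence mX: "M = X" unfolding pqX .
      show ?thesis unfolding mX hX using XJX by simp
    next
      assume "- M = pq_matrix p q k zp zm"
      hence mX0: "- M = X" unfolding pqX .
      have "M = - (- M)" by (rule uminus_uminus_mat[symmetric])
      hence mX: "M = - X" unfolding mX0 .
      have aM: "adj M = M" unfolding mX adj_uminus[OF X] hX ..
      have "- X * ?J * - X = ?J" using XJX X by simp
      hence "M * ?J * M = ?J" unfolding mX .
      thus ?thesis using aM by simp
    qed
  qed
qed

end
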